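(* Consider, for each $p$, the model $Y = X\beta^\star + Z$ described in the context, with $\beta^\star \in \mathcal{B}_{p,s}$ and the estimator $\hat\beta \in \arg\min_{\beta \in \mathcal{B}_{p,s}} \|Y - X\beta\|_2^2$. Fix $\delta \in (0,1)$. 1. If $s = o(p)$ and $s \to +\infty$ as $p \to +\infty$, set $n^\star := 2 s \log(p/s)$. 2. If $s = \alpha p$ for some constant $\alpha \in (0,1)$, set $n^\star := 2 h(\alpha) p$. In both settings, if there exists $\varepsilon > 0$ such that (for all sufficiently large $p$) $$ n_1 \log\left(1 + \frac{\delta (2\sigma_2^2 - \sigma_1^2) s}{2\sigma_2^4}\right) + n_2 \log\left(1 + \frac{\delta s}{2\sigma_2^2}\right) \ge (1+\varepsilon) n^\star, $$ then $$ \mathbb{P}\Big( |\operatorname{supp}(\beta^\star) \,\triangle\, \operatorname{supp}(\hat\beta)| < 2\delta s \Big) \ge 1 - \exp\{-(\varepsilon + o(1)) n^\star/2\} \xrightarrow{p\to+\infty} 1 .$$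
   Context: All quantities may depend on $p$, and asymptotics are as $p \to +\infty$. Sample sizes $n_1, n_2 \ge 1$, $n = n_1 + n_2$. The design $X \in \mathbb{R}^{n\times p}$ has i.i.d. $\mathcal{N}(0,1)$ entries. Noise levels satisfy $0 < \sigma_1^2 < \sigma_2^2$; $\Sigma = \begin{pmatrix} \sigma_1 I_{n_1} & 0 \\ 0 & \sigma_2 I_{n_2}\end{pmatrix}$, $W \sim \mathcal{N}(0, I_n)$ independent of $X$, and $Z = \Sigma W$ (so the first $n_1$ observations have noise variance $\sigma_1^2$ and the last $n_2$ have variance $\sigma_2^2$). The signal $\beta^\star$ is deterministic and belongs to $\mathcal{B}_{p,s} := \{\beta \in \{0,1\}^p : \|\beta\|_0 = s\}$, where $\|\beta\|_0$ is the number of nonzero coordinates. $\operatorname{supp}(\beta) = \{i : \beta_i \neq 0\}$, $A \triangle B = (A\cup B)\setminus(A\cap B)$. $h(x) = -x\log x - (1-x)\log(1-x)$ is the binary entropy (natural logarithm). The estimator $\hat\beta$ is any minimizer (it does not use knowledge of $\sigma_1,\sigma_2,n_1,n_2$). *)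

theory Defs
  imports "HOL-Probability.Probability"
begin

definition bin_entropy :: "real \<Rightarrow> real" where
  "bin_entropy x = - x * ln x - (1 - x) * ln (1 - x)"

definition gauss :: "real measure" where
  "gauss = density lborel std_normal_density"

text \<open>Sample space: the design X (entries indexed by (i,j), i < n, j < p) and the
  noise vector W (indexed by i < n), all entries i.i.d. N(0,1), X independent of W.\<close>
definition design_space :: "nat \<Rightarrow> nat \<Rightarrow> ((nat \<times> nat \<Rightarrow> real) \<times> (nat \<Rightarrow> real)) measure" where
  "design_space n p = (PiM ({..<n} \<times> {..<p}) (\<lambda>_. gauss)) \<Otimes>\<^sub>M (PiM {..<n} (\<lambda>_. gauss))"

definition Bps :: "nat \<Rightarrow> nat \<Rightarrow> (nat \<Rightarrow> real) set" where
  "Bps p s = {\<beta>. (\<forall>j. \<beta> j \<in> {0, 1}) \<and> (\<forall>j\<ge>p. \<beta> j = 0) \<and> card {j. \<beta> j \<noteq> 0} = s}"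

definition supp :: "(nat \<Rightarrow> real) \<Rightarrow> nat set" where
  "supp \<beta> = {j. \<beta> j \<noteq> 0}"

definition symdiff :: "'a set \<Rightarrow> 'a set \<Rightarrow> 'a set" where
  "symdiff A B = (A \<union> B) - (A \<inter> B)"

text \<open>Noise standard deviation of observation i (diagonal of Sigma).\<close>
definition noise_sd :: "nat \<Rightarrow> real \<Rightarrow> real \<Rightarrow> nat \<Rightarrow> real" where
  "noise_sd n1 \<sigma>1 \<sigma>2 i = (if i < n1 then \<sigma>1 else \<sigma>2)"

definition response :: "nat \<Rightarrow> nat \<Rightarrow> real \<Rightarrow> real \<Rightarrow> (nat \<Rightarrow> real)
    \<Rightarrow> (nat \<times> nat \<Rightarrow> real) \<Rightarrow> (nat \<Rightarrow> real) \<Rightarrow> nat \<Rightarrow> real" where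
  "response p n1 \<sigma>1 \<sigma>2 \<beta>s X W i =
     (\<Sum>j<p. X (i, j) * \<beta>s j) + noise_sd n1 \<sigma>1 \<sigma>2 i * W i"

definition rss :: "nat \<Rightarrow> nat \<Rightarrow> (nat \<times> nat \<Rightarrow> real) \<Rightarrow> (nat \<Rightarrow> real) \<Rightarrow> (nat \<Rightarrow> real) \<Rightarrow> real" where
  "rss n p X Y \<beta> = (\<Sum>i<n. (Y i - (\<Sum>j<p. X (i, j) * \<beta> j))\<^sup>2)"

definition ls_argmin :: "nat \<Rightarrow> nat \<Rightarrow> nat \<Rightarrow> (nat \<times> nat \<Rightarrow> real) \<Rightarrow> (nat \<Rightarrow> real) \<Rightarrow> (nat \<Rightarrow> real) set" where
  "ls_argmin n p s X Y = {\<beta> \<in> Bps p s. \<forall>\<beta>' \<in> Bps p s. rss n p X Y \<beta> \<le> rss n p X Y \<beta>'}"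

text \<open>Probability that EVERY least-squares minimizer beta-hat satisfies
  |supp beta* triangle supp beta-hat| < 2 delta s (so the bound holds whatever
  minimizer the estimator returns).\<close>
definition recovery_prob :: "nat \<Rightarrow> nat \<Rightarrow> nat \<Rightarrow> nat \<Rightarrow> real \<Rightarrow> real \<Rightarrow> (nat \<Rightarrow> real) \<Rightarrow> real \<Rightarrow> real" where
  "recovery_prob n1 n2 p s \<sigma>1 \<sigma>2 \<beta>s \<delta> =
     measure (design_space (n1 + n2) p)
       {\<omega> \<in> space (design_space (n1 + n2) p).
          \<forall>\<beta>h \<in> ls_argmin (n1 + n2) p s (fst \<omega>) (response p n1 \<sigma>1 \<sigma>2 \<beta>s (fst \<omega>) (snd \<omega>)).
            real (card (symdiff (supp \<beta>s) (supp \<beta>h))) < 2 * \<delta> * real s}"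

end

theory Submission
  imports Defs
begin

lemma gauss_prob: "prob_space gauss"
  unfolding gauss_def by (rule prob_space_normal_density) simp

lemma sets_gauss[simp, measurable_cong]: "sets gauss = sets borel"
  unfolding gauss_def by simp

lemma space_gauss[simp]: "space gauss = UNIV"
  unfolding gauss_def by simp

lemma nn_gauss_exp_lin: "(\<integral>\<^sup>+w. ennreal (exp (b*w)) \<partial>gauss) = ennreal (exp (b\<^sup>2/2))"
proof -
  have eq: "std_normal_density w * exp (b*w) = exp (b\<^sup>2/2) * normal_density b 1 w" for w
  proof -
    have "exp (b\<^sup>2/2) * exp (-(w-b)\<^sup>2/2) = exp (- w\<^sup>2/2) * exp (b*w)"
      by (simp add: mult_exp_exp power2_eq_square algebra_simps add_divide_distrib diff_divide_distrib)
    then show ?thesis by (simp add: normal_density_def)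
  qed
  have "(\<integral>\<^sup>+w. ennreal (exp (b*w)) \<partial>gauss) = (\<integral>\<^sup>+w. ennreal (std_normal_density w) * ennreal (exp (b*w)) \<partial>lborel)"
    unfolding gauss_def by (subst nn_integral_density) auto
  also have "\<dots> = (\<integral>\<^sup>+w. ennreal (exp (b\<^sup>2/2)) * ennreal (normal_density b 1 w) \<partial>lborel)"
    by (intro nn_integral_cong) (simp add: eq[symmetric] ennreal_mult'[symmetric])
  also have "\<dots> = ennreal (exp (b\<^sup>2/2)) * (\<integral>\<^sup>+w. ennreal (normal_density b 1 w) \<partial>lborel)"
    by (rule nn_integral_cmult) auto
  also have "(\<integral>\<^sup>+w. ennreal (normal_density b 1 w) \<partial>lborel) = 1"
    by (subst nn_integral_eq_integral) auto
  finally show ?thesis by simp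
qed

lemma nn_normal_exp_quad:
  assumes v: "0 < v" and a: "0 \<le> a"
  shows "(\<integral>\<^sup>+x. ennreal (normal_density 0 v x) * ennreal (exp (- a * x\<^sup>2)) \<partial>lborel)
         = ennreal (1 / sqrt (1 + 2 * a * v\<^sup>2))"
proof -
  define r where "r = sqrt (1 + 2 * a * v\<^sup>2)"
  have q: "0 < 1 + 2 * a * v\<^sup>2" using a v by (simp add: add_pos_nonneg)
  have r: "0 < r" "r\<^sup>2 = 1 + 2 * a * v\<^sup>2" using q by (auto simp: r_def)
  have eq: "normal_density 0 v x * exp (- a * x\<^sup>2) = (1/r) * normal_density 0 (v/r) x" for x
  proof -
    have e: "exp (-(x - 0)\<^sup>2 / (2 * v\<^sup>2)) * exp (- a * x\<^sup>2) = exp (-(x - 0)\<^sup>2 / (2 * (v/r)\<^sup>2))"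
      unfolding mult_exp_exp using v r
      by (simp add: power_divide field_simps)
    have sq: "sqrt (2 * (pi * (v/r)\<^sup>2)) = sqrt (2 * (pi * v\<^sup>2)) / r"
    proof -
      have h: "2 * (pi * (v/r)\<^sup>2) = (2 * (pi * v\<^sup>2)) / r\<^sup>2" by (simp add: power_divide)
      have h2: "sqrt (r\<^sup>2) = r" using r(1) by simp
      show ?thesis by (simp only: h real_sqrt_divide h2)
    qed
    show ?thesis unfolding normal_density_def mult.assoc sq e using r(1) v
      by simp
  qed
  have "(\<integral>\<^sup>+x. ennreal (normal_density 0 v x) * ennreal (exp (- a * x\<^sup>2)) \<partial>lborel)
      = (\<integral>\<^sup>+x. ennreal (1/r) * ennreal (normal_density 0 (v/r) x) \<partial>lborel)"
  proof (intro nn_integral_cong)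
    fix x
    have "normal_density 0 v x * exp (- (a * x\<^sup>2)) = normal_density 0 (v/r) x / r"
      using eq[of x] by simp
    then show "ennreal (normal_density 0 v x) * ennreal (exp (- a * x\<^sup>2)) = ennreal (1/r) * ennreal (normal_density 0 (v/r) x)"
      using r(1) by (simp add: ennreal_mult[symmetric])
  qed
  also have "\<dots> = ennreal (1/r) * (\<integral>\<^sup>+x. ennreal (normal_density 0 (v/r) x) \<partial>lborel)"
    by (rule nn_integral_cmult) auto
  also have "(\<integral>\<^sup>+x. ennreal (normal_density 0 (v/r) x) \<partial>lborel) = 1"
    using v r(1) by (subst nn_integral_eq_integral) auto
  finally show ?thesis by (simp add: r_def)
qed

lemma prob_PiM_gauss: "prob_space (PiM K (\<lambda>_. gauss))"
  by (rule prob_space_PiM) (rule gauss_prob)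

lemma indep_coord_reindex:
  assumes f: "inj_on f S" "f ` S \<subseteq> K" and S: "S \<noteq> {}"
  shows "prob_space.indep_vars (PiM K (\<lambda>_. gauss)) (\<lambda>_. borel) (\<lambda>j \<omega>. \<omega> (f j)) S"
proof -
  interpret P: prob_space "PiM K (\<lambda>_. gauss)" by (rule prob_PiM_gauss)
  have rv: "(\<lambda>\<omega>. \<omega> (f j)) \<in> measurable (PiM K (\<lambda>_. gauss)) gauss" if "j \<in> S" for j
    using f that measurable_component_singleton[of "f j" K "\<lambda>_. gauss"] by auto
  have "distr (PiM K (\<lambda>_. gauss)) (\<Pi>\<^sub>M j\<in>S. gauss) (\<lambda>\<omega>. \<lambda>j\<in>S. \<omega> (f j)) = (\<Pi>\<^sub>M j\<in>S. gauss)"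
    using distr_PiM_reindex[of K "\<lambda>_. gauss" f S] f gauss_prob by auto
  also have "\<dots> = (\<Pi>\<^sub>M j\<in>S. distr (PiM K (\<lambda>_. gauss)) gauss (\<lambda>\<omega>. \<omega> (f j)))"
    by (intro PiM_cong refl distr_PiM_component[symmetric] gauss_prob) (use f in auto)
  finally have "P.indep_vars (\<lambda>_. gauss) (\<lambda>j \<omega>. \<omega> (f j)) S"
    by (subst P.indep_vars_iff_distr_eq_PiM'[OF S rv]) auto
  then have "P.indep_vars (\<lambda>_. borel) (\<lambda>j \<omega>. (\<lambda>x. x) (\<omega> (f j))) S"
    by (rule P.indep_vars_compose2) (simp add: measurable_ident_sets)
  then show ?thesis by simp
qed

lemma coord_distributed:
  assumes "k \<in> K"
  shows "distributed (PiM K (\<lambda>_. gauss)) lborel (\<lambda>\<omega>. \<omega> k) std_normal_density"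
proof -
  have "distr (PiM K (\<lambda>_. gauss)) lborel (\<lambda>\<omega>. \<omega> k) = distr (PiM K (\<lambda>_. gauss)) gauss (\<lambda>\<omega>. \<omega> k)"
    by (rule distr_cong) auto
  also have "\<dots> = gauss" using assms by (intro distr_PiM_component gauss_prob)
  finally show ?thesis unfolding distributed_def using assms
    by (auto simp: gauss_def intro!: measurable_component_singleton measurable_ident_sets)
qed

lemma row_distributed:
  fixes v :: "nat \<Rightarrow> real"
  assumes v: "\<forall>j<p. v j \<in> {-1, 0, 1}" and J0: "{j. j < p \<and> v j \<noteq> 0} \<noteq> {}"
    and i: "i \<in> I"
  shows "distributed (PiM (I \<times> {..<p}) (\<lambda>_. gauss)) lborel (\<lambda>\<omega>. \<Sum>j<p. \<omega> (i, j) * v j)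
           (normal_density 0 (sqrt (real (card {j. j < p \<and> v j \<noteq> 0}))))"
proof -
  interpret P: prob_space "PiM (I \<times> {..<p}) (\<lambda>_. gauss)" by (rule prob_PiM_gauss)
  define J0 where "J0 = {j. j < p \<and> v j \<noteq> 0}"
  have fin: "finite J0" by (auto simp: J0_def)
  have sub: "J0 \<subseteq> {..<p}" by (auto simp: J0_def)
  have ind: "P.indep_vars (\<lambda>_. borel) (\<lambda>j \<omega>. \<omega> (i, j)) J0"
    by (rule indep_coord_reindex) (use J0 sub i in \<open>auto simp: J0_def inj_on_def\<close>)
  have ind2: "P.indep_vars (\<lambda>_. borel) (\<lambda>j \<omega>. \<omega> (i, j) * v j) J0"
    using P.indep_vars_compose2[OF ind, of "\<lambda>j x. x * v j" "\<lambda>_. borel"] by simp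
  have dist: "distributed (PiM (I \<times> {..<p}) (\<lambda>_. gauss)) lborel (\<lambda>\<omega>. \<omega> (i, j) * v j) (normal_density 0 1)"
    if j: "j \<in> J0" for j
  proof -
    have vj: "v j \<noteq> 0" "\<bar>v j\<bar> = 1" using j v by (auto simp: J0_def)
    have "distributed (PiM (I \<times> {..<p}) (\<lambda>_. gauss)) lborel (\<lambda>\<omega>. 0 + v j * \<omega> (i, j))
            (normal_density (0 + v j * 0) (\<bar>v j\<bar> * 1))"
      by (rule P.normal_density_affine) (use coord_distributed[of "(i,j)" "I \<times> {..<p}"] i j sub vj in auto)
    then show ?thesis using vj by (simp add: mult.commute)
  qed
  have "distributed (PiM (I \<times> {..<p}) (\<lambda>_. gauss)) lborel (\<lambda>\<omega>. \<Sum>j\<in>J0. \<omega> (i, j) * v j)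
           (normal_density (\<Sum>j\<in>J0. 0) (sqrt (\<Sum>j\<in>J0. 1\<^sup>2)))"
    by (rule P.sum_indep_normal[OF fin _ ind2]) (use J0 dist in \<open>auto simp: J0_def\<close>)
  moreover have "(\<lambda>\<omega>. \<Sum>j<p. \<omega> (i, j) * v j) = (\<lambda>\<omega>. \<Sum>j\<in>J0. \<omega> (i, j) * v j)"
    by (intro ext sum.mono_neutral_right) (auto simp: J0_def)
  ultimately show ?thesis by (simp add: J0_def)
qed

lemma X_part:
  fixes v a :: "nat \<Rightarrow> real"
  assumes v: "\<forall>j<p. v j \<in> {-1, 0, 1}" and J0: "{j. j < p \<and> v j \<noteq> 0} \<noteq> {}"
    and a: "\<forall>i<n. 0 \<le> a i" and n: "0 < n"
  shows "(\<integral>\<^sup>+\<omega>. (\<Prod>i<n. ennreal (exp (- a i * (\<Sum>j<p. \<omega> (i, j) * v j)\<^sup>2))) \<partial>PiM ({..<n} \<times> {..<p}) (\<lambda>_. gauss))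
       = (\<Prod>i<n. ennreal (1 / sqrt (1 + 2 * a i * real (card {j. j < p \<and> v j \<noteq> 0}))))"
proof -
  interpret P: prob_space "PiM ({..<n} \<times> {..<p}) (\<lambda>_. gauss)" by (rule prob_PiM_gauss)
  define m where "m = real (card {j. j < p \<and> v j \<noteq> 0})"
  have p: "0 < p" using J0 by auto
  have m: "0 < m" using J0 by (auto simp: m_def card_gt_0_iff)
  have ind0: "P.indep_vars (\<lambda>_. borel) (\<lambda>k \<omega>. \<omega> ((\<lambda>k. k) k)) ({..<n} \<times> {..<p})"
    by (rule indep_coord_reindex) (use n p in auto)
  then have ind: "P.indep_vars (\<lambda>_. borel) (\<lambda>k \<omega>. \<omega> k) ({..<n} \<times> {..<p})" by simp
  have blk: "P.indep_vars (\<lambda>i. PiM ({i} \<times> {..<p}) (\<lambda>_. borel))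
      (\<lambda>i \<omega>. restrict (\<lambda>k. \<omega> k) ({i} \<times> {..<p})) {..<n}"
    by (rule P.indep_vars_restrict[OF ind]) (auto simp: disjoint_family_on_def)
  define Y where "Y i r = ennreal (exp (- a i * (\<Sum>j<p. r (i, j) * v j)\<^sup>2))" for i and r :: "nat \<times> nat \<Rightarrow> real"
  have Ym: "Y i \<in> borel_measurable (PiM ({i} \<times> {..<p}) (\<lambda>_. borel))" for i
    unfolding Y_def by measurable
  have ind3: "P.indep_vars (\<lambda>_. borel) (\<lambda>i \<omega>. Y i (restrict (\<lambda>k. \<omega> k) ({i} \<times> {..<p}))) {..<n}"
    by (rule P.indep_vars_compose2[OF blk]) (rule Ym)
  have YY: "Y i (restrict (\<lambda>k. \<omega> k) ({i} \<times> {..<p})) = ennreal (exp (- a i * (\<Sum>j<p. \<omega> (i, j) * v j)\<^sup>2))" for i \<omega>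
    unfolding Y_def by (intro arg_cong[where f=ennreal] arg_cong[where f=exp] arg_cong2[where f="(*)"] refl
       arg_cong[where f="\<lambda>x. x\<^sup>2"] sum.cong) auto
  have "(\<integral>\<^sup>+\<omega>. (\<Prod>i<n. ennreal (exp (- a i * (\<Sum>j<p. \<omega> (i, j) * v j)\<^sup>2))) \<partial>PiM ({..<n} \<times> {..<p}) (\<lambda>_. gauss))
      = (\<integral>\<^sup>+\<omega>. (\<Prod>i<n. Y i (restrict (\<lambda>k. \<omega> k) ({i} \<times> {..<p}))) \<partial>PiM ({..<n} \<times> {..<p}) (\<lambda>_. gauss))"
    by (simp add: YY)
  also have "\<dots> = (\<Prod>i<n. \<integral>\<^sup>+\<omega>. Y i (restrict (\<lambda>k. \<omega> k) ({i} \<times> {..<p})) \<partial>PiM ({..<n} \<times> {..<p}) (\<lambda>_. gauss))"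
    by (rule P.indep_vars_nn_integral[OF _ ind3]) auto
  also have "\<dots> = (\<Prod>i<n. ennreal (1 / sqrt (1 + 2 * a i * m)))"
  proof (rule prod.cong[OF refl])
    fix i assume i: "i \<in> {..<n}"
    have dist: "distributed (PiM ({..<n} \<times> {..<p}) (\<lambda>_. gauss)) lborel (\<lambda>\<omega>. \<Sum>j<p. \<omega> (i, j) * v j)
           (normal_density 0 (sqrt m))"
      unfolding m_def by (rule row_distributed[OF v J0 i])
    have "(\<integral>\<^sup>+\<omega>. Y i (restrict (\<lambda>k. \<omega> k) ({i} \<times> {..<p})) \<partial>PiM ({..<n} \<times> {..<p}) (\<lambda>_. gauss))
        = (\<integral>\<^sup>+\<omega>. (\<lambda>x. ennreal (exp (- a i * x\<^sup>2))) (\<Sum>j<p. \<omega> (i, j) * v j) \<partial>PiM ({..<n} \<times> {..<p}) (\<lambda>_. gauss))"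
      by (simp add: YY)
    also have "\<dots> = (\<integral>\<^sup>+x. ennreal (normal_density 0 (sqrt m) x) * ennreal (exp (- a i * x\<^sup>2)) \<partial>lborel)"
      by (rule distributed_nn_integral[OF dist, symmetric]) simp
    also have "\<dots> = ennreal (1 / sqrt (1 + 2 * a i * (sqrt m)\<^sup>2))"
      by (rule nn_normal_exp_quad) (use m a i in auto)
    also have "\<dots> = ennreal (1 / sqrt (1 + 2 * a i * m))" using m by simp
    finally show "(\<integral>\<^sup>+\<omega>. Y i (restrict (\<lambda>k. \<omega> k) ({i} \<times> {..<p})) \<partial>PiM ({..<n} \<times> {..<p}) (\<lambda>_. gauss))
        = ennreal (1 / sqrt (1 + 2 * a i * m))" .
  qed
  finally show ?thesis by (simp add: m_def)
qed

lemma psf_gauss: "product_sigma_finite (\<lambda>_::nat. gauss)"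
  unfolding product_sigma_finite_def
  using prob_space_imp_sigma_finite[OF gauss_prob] by blast

lemma W_part:
  fixes n :: nat and c :: "nat \<Rightarrow> real"
  shows  "(\<integral>\<^sup>+w. (\<Prod>i<n. ennreal (exp (c i * w i))) \<partial>PiM {..<n} (\<lambda>_. gauss))
     = (\<Prod>i<n. ennreal (exp ((c i)\<^sup>2/2)))"
  using product_sigma_finite.product_nn_integral_prod[OF psf_gauss, of "{..<n}" "\<lambda>i x. ennreal (exp (c i * x))"]
  by (simp add: nn_gauss_exp_lin)

lemma tail_one:
  fixes v sd :: "nat \<Rightarrow> real" and t :: real
  assumes v: "\<forall>j<p. v j \<in> {-1, 0, 1}" and J0: "{j. j < p \<and> v j \<noteq> 0} \<noteq> {}"
    and a: "\<forall>i<n. 0 \<le> t - 2 * t\<^sup>2 * (sd i)\<^sup>2" and n: "0 < n" and t: "0 < t"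
  shows "measure (design_space n p) {\<omega> \<in> space (design_space n p).
      (\<Sum>i<n. (\<Sum>j<p. fst \<omega> (i, j) * v j)\<^sup>2 + 2 * (\<Sum>j<p. fst \<omega> (i, j) * v j) * (sd i * snd \<omega> i)) \<le> 0}
    \<le> (\<Prod>i<n. 1 / sqrt (1 + 2 * (t - 2 * t\<^sup>2 * (sd i)\<^sup>2) * real (card {j. j < p \<and> v j \<noteq> 0})))"
proof -
  define M1 where "M1 = PiM ({..<n} \<times> {..<p}) (\<lambda>_. gauss)"
  define M2 where "M2 = PiM {..<n} (\<lambda>_. gauss)"
  have D: "design_space n p = M1 \<Otimes>\<^sub>M M2" by (simp add: design_space_def M1_def M2_def)
  interpret P1: prob_space M1 unfolding M1_def by (rule prob_PiM_gauss)
  interpret P2: prob_space M2 unfolding M2_def by (rule prob_PiM_gauss)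
  interpret P12: pair_prob_space M1 M2 ..
  define m where "m = real (card {j. j < p \<and> v j \<noteq> 0})"
  have nn: "0 \<le> 1 / sqrt (1 + 2 * (t - 2 * t\<^sup>2 * (sd i)\<^sup>2) * m)" if "i \<in> {..<n}" for i
  proof -
    have "0 \<le> t - 2 * t\<^sup>2 * (sd i)\<^sup>2" using a that by auto
    then have "0 \<le> 2 * (t - 2 * t\<^sup>2 * (sd i)\<^sup>2) * m" by (simp add: m_def)
    then show ?thesis by simp
  qed
  note prodnn = prod_nonneg[OF nn]
  define g where "g X i = (\<Sum>j<p. X (i, j) * v j)" for X :: "nat \<times> nat \<Rightarrow> real" and i
  define Q where "Q \<omega> = (\<Sum>i<n. (g (fst \<omega>) i)\<^sup>2 + 2 * g (fst \<omega>) i * (sd i * snd \<omega> i))" for \<omega>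
  define A where "A = {\<omega> \<in> space (M1 \<Otimes>\<^sub>M M2). Q \<omega> \<le> 0}"
  have Qm: "Q \<in> borel_measurable (M1 \<Otimes>\<^sub>M M2)"
    unfolding Q_def g_def M1_def M2_def by measurable
  have Am: "A \<in> sets (M1 \<Otimes>\<^sub>M M2)" unfolding A_def using Qm by measurable
  have "emeasure (M1 \<Otimes>\<^sub>M M2) A = (\<integral>\<^sup>+\<omega>. indicator A \<omega> \<partial>(M1 \<Otimes>\<^sub>M M2))"
    using Am by simp
  also have "\<dots> \<le> (\<integral>\<^sup>+\<omega>. ennreal (exp (- t * Q \<omega>)) \<partial>(M1 \<Otimes>\<^sub>M M2))"
  proof (rule nn_integral_mono)
    fix \<omega> show "indicator A \<omega> \<le> ennreal (exp (- t * Q \<omega>))"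
      using t by (auto simp: A_def split: split_indicator intro!: mult_nonneg_nonpos)
  qed
  also have "\<dots> = (\<integral>\<^sup>+X. \<integral>\<^sup>+W. ennreal (exp (- t * Q (X, W))) \<partial>M2 \<partial>M1)"
    by (rule P2.nn_integral_fst[symmetric]) (use Qm in measurable)
  also have "\<dots> = (\<integral>\<^sup>+X. (\<Prod>i<n. ennreal (exp (- (t - 2 * t\<^sup>2 * (sd i)\<^sup>2) * (g X i)\<^sup>2))) \<partial>M1)"
  proof (rule nn_integral_cong)
    fix X
    define c where "c i = - 2 * t * sd i * g X i" for i
    have "(\<lambda>W. ennreal (exp (- t * Q (X, W)))) = (\<lambda>W. ennreal (\<Prod>i<n. exp (- t * (g X i)\<^sup>2)) * (\<Prod>i<n. ennreal (exp (c i * W i))))"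
    proof
      fix W
      have "exp (- t * Q (X, W)) = (\<Prod>i<n. exp (- t * (g X i)\<^sup>2) * exp (c i * W i))"
        unfolding Q_def sum_distrib_left[symmetric] exp_sum[OF finite_lessThan, symmetric] mult_exp_exp
        by (simp add: c_def sum_distrib_left algebra_simps sum_negf[symmetric])
      also have "\<dots> = (\<Prod>i<n. exp (- t * (g X i)\<^sup>2)) * (\<Prod>i<n. exp (c i * W i))"
        by (rule prod.distrib)
      finally show "ennreal (exp (- t * Q (X, W))) = ennreal (\<Prod>i<n. exp (- t * (g X i)\<^sup>2)) * (\<Prod>i<n. ennreal (exp (c i * W i)))"
        by (simp add: ennreal_mult[symmetric] prod_nonneg prod_ennreal)
    qed
    then have "(\<integral>\<^sup>+W. ennreal (exp (- t * Q (X, W))) \<partial>M2)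
        = ennreal (\<Prod>i<n. exp (- t * (g X i)\<^sup>2)) * (\<integral>\<^sup>+W. (\<Prod>i<n. ennreal (exp (c i * W i))) \<partial>M2)"
      by (simp add: M2_def nn_integral_cmult)
    also have "\<dots> = ennreal (\<Prod>i<n. exp (- t * (g X i)\<^sup>2)) * (\<Prod>i<n. ennreal (exp ((c i)\<^sup>2/2)))"
      unfolding M2_def W_part ..
    also have "\<dots> = (\<Prod>i<n. ennreal (exp (- (t - 2 * t\<^sup>2 * (sd i)\<^sup>2) * (g X i)\<^sup>2)))"
    proof -
      have "(\<Prod>i<n. exp (- t * (g X i)\<^sup>2)) * (\<Prod>i<n. exp ((c i)\<^sup>2/2)) = (\<Prod>i<n. exp (- (t - 2 * t\<^sup>2 * (sd i)\<^sup>2) * (g X i)\<^sup>2))"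
        unfolding prod.distrib[symmetric] mult_exp_exp
        by (intro prod.cong refl arg_cong[where f=exp]) (simp add: c_def power2_eq_square algebra_simps)
      then show ?thesis by (simp add: ennreal_mult[symmetric] prod_nonneg prod_ennreal)
    qed
    finally show "(\<integral>\<^sup>+W. ennreal (exp (- t * Q (X, W))) \<partial>M2) = (\<Prod>i<n. ennreal (exp (- (t - 2 * t\<^sup>2 * (sd i)\<^sup>2) * (g X i)\<^sup>2)))" .
  qed
  also have "\<dots> = (\<Prod>i<n. ennreal (1 / sqrt (1 + 2 * (t - 2 * t\<^sup>2 * (sd i)\<^sup>2) * m)))"
    unfolding M1_def g_def m_def by (rule X_part[OF v J0 _ n]) (use a in auto)
  also have "\<dots> = ennreal (\<Prod>i<n. 1 / sqrt (1 + 2 * (t - 2 * t\<^sup>2 * (sd i)\<^sup>2) * m))"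
    by (rule prod_ennreal) (use nn in auto)
  finally have "emeasure (M1 \<Otimes>\<^sub>M M2) A \<le> ennreal (\<Prod>i<n. 1 / sqrt (1 + 2 * (t - 2 * t\<^sup>2 * (sd i)\<^sup>2) * m))" .
  then have "measure (M1 \<Otimes>\<^sub>M M2) A \<le> (\<Prod>i<n. 1 / sqrt (1 + 2 * (t - 2 * t\<^sup>2 * (sd i)\<^sup>2) * m))"
    by (simp only: P12.emeasure_eq_measure ennreal_le_iff[OF prodnn])
  then show ?thesis unfolding D A_def Q_def g_def m_def by simp
qed

lemma Bps_sub: "Bps p s \<subseteq> (\<lambda>S j. indicator S j) ` {S. S \<subseteq> {..<p} \<and> card S = s}"
proof
  fix \<beta> assume b: "\<beta> \<in> Bps p s"
  have "\<beta> = (\<lambda>j. indicator {j. \<beta> j \<noteq> 0} j)"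
  proof
    fix j show "\<beta> j = indicator {j. \<beta> j \<noteq> 0} j" using b by (auto simp: Bps_def indicator_def)
  qed
  moreover have "{j. \<beta> j \<noteq> 0} \<subseteq> {..<p}"
    using b by (auto simp: Bps_def) (meson not_le)
  ultimately show "\<beta> \<in> (\<lambda>S j. indicator S j) ` {S. S \<subseteq> {..<p} \<and> card S = s}"
    using b by (auto simp: Bps_def)
qed

lemma Bps_finite[simp]: "finite (Bps p s)"
  by (rule finite_subset[OF Bps_sub]) auto

lemma card_Bps: "card (Bps p s) \<le> p choose s"
proof -
  have "card (Bps p s) \<le> card ((\<lambda>S j. indicator S j :: real) ` {S. S \<subseteq> {..<p} \<and> card S = s})"
    by (rule card_mono[OF _ Bps_sub]) auto
  also have "\<dots> \<le> card {S. S \<subseteq> {..<p} \<and> card S = s}"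
    by (rule card_image_le) auto
  also have "\<dots> = p choose s" by (subst n_subsets) auto
  finally show ?thesis .
qed

lemma Bps_vals: "\<beta> \<in> Bps p s \<Longrightarrow> \<beta> j = 0 \<or> \<beta> j = 1"
  by (auto simp: Bps_def)

lemma Bps_out: "\<beta> \<in> Bps p s \<Longrightarrow> p \<le> j \<Longrightarrow> \<beta> j = 0"
  by (auto simp: Bps_def)

lemma diff_vals:
  assumes "\<beta> \<in> Bps p s" "\<gamma> \<in> Bps p s"
  shows "\<forall>j<p. (\<gamma> j - \<beta> j) \<in> {-1, 0, 1}"
proof (intro allI impI)
  fix j show "(\<gamma> j - \<beta> j) \<in> {-1, 0, 1}"
    using Bps_vals[OF assms(1), of j] Bps_vals[OF assms(2), of j] by auto
qed

lemma diff_support: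
  assumes "\<beta> \<in> Bps p s" "\<gamma> \<in> Bps p s"
  shows "{j. j < p \<and> \<gamma> j - \<beta> j \<noteq> 0} = symdiff (supp \<gamma>) (supp \<beta>)"
proof -
  have "j < p" if "\<gamma> j \<noteq> 0 \<or> \<beta> j \<noteq> 0" for j
    using that Bps_out[OF assms(1), of j] Bps_out[OF assms(2), of j] by (meson not_le)
  then show ?thesis
    using Bps_vals[OF assms(1)] Bps_vals[OF assms(2)]
    unfolding symdiff_def supp_def by (auto; metis zero_neq_one)
qed

lemma rss_diff:
  "rss n p X (response p n1 \<sigma>1 \<sigma>2 \<gamma> X W) \<beta> - rss n p X (response p n1 \<sigma>1 \<sigma>2 \<gamma> X W) \<gamma>
   = (\<Sum>i<n. (\<Sum>j<p. X (i, j) * (\<gamma> j - \<beta> j))\<^sup>2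
        + 2 * (\<Sum>j<p. X (i, j) * (\<gamma> j - \<beta> j)) * (noise_sd n1 \<sigma>1 \<sigma>2 i * W i))"
  unfolding rss_def response_def sum_subtractf[symmetric]
proof (rule sum.cong[OF refl])
  fix i
  have e: "(\<Sum>j<p. X (i, j) * (\<gamma> j - \<beta> j)) = (\<Sum>j<p. X (i, j) * \<gamma> j) - (\<Sum>j<p. X (i, j) * \<beta> j)"
    by (simp add: right_diff_distrib sum_subtractf)
  show "((\<Sum>j<p. X (i, j) * \<gamma> j) + noise_sd n1 \<sigma>1 \<sigma>2 i * W i - (\<Sum>j<p. X (i, j) * \<beta> j))\<^sup>2 -
         ((\<Sum>j<p. X (i, j) * \<gamma> j) + noise_sd n1 \<sigma>1 \<sigma>2 i * W i - (\<Sum>j<p. X (i, j) * \<gamma> j))\<^sup>2 =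
         (\<Sum>j<p. X (i, j) * (\<gamma> j - \<beta> j))\<^sup>2 + 2 * (\<Sum>j<p. X (i, j) * (\<gamma> j - \<beta> j)) * (noise_sd n1 \<sigma>1 \<sigma>2 i * W i)"
    unfolding e by (simp add: power2_eq_square algebra_simps)
qed

lemma coef_bound:
  fixes \<sigma> \<sigma>2 m \<delta> s :: real
  assumes "0 < \<sigma>" "\<sigma> \<le> \<sigma>2" "2 * \<delta> * s \<le> m"
  shows "1 + \<delta> * (2 * \<sigma>2\<^sup>2 - \<sigma>\<^sup>2) * s / (2 * \<sigma>2 ^ 4)
         \<le> 1 + 2 * (1 / (4 * \<sigma>2\<^sup>2) - 2 * (1 / (4 * \<sigma>2\<^sup>2))\<^sup>2 * \<sigma>\<^sup>2) * m"
    and "0 \<le> 1 / (4 * \<sigma>2\<^sup>2) - 2 * (1 / (4 * \<sigma>2\<^sup>2))\<^sup>2 * \<sigma>\<^sup>2"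
proof -
  have s2: "0 < \<sigma>2" using assms by linarith
  have sq: "\<sigma>\<^sup>2 \<le> \<sigma>2\<^sup>2" using assms by (intro power_mono) auto
  have id: "2 * (1 / (4 * \<sigma>2\<^sup>2) - 2 * (1 / (4 * \<sigma>2\<^sup>2))\<^sup>2 * \<sigma>\<^sup>2) = (2 * \<sigma>2\<^sup>2 - \<sigma>\<^sup>2) / (4 * \<sigma>2 ^ 4)"
    using s2 by (simp add: field_simps eval_nat_numeral)
  have c0: "0 \<le> 2 * \<sigma>2\<^sup>2 - \<sigma>\<^sup>2" using sq zero_le_power2[of \<sigma>2] by linarith
  have c: "0 \<le> (2 * \<sigma>2\<^sup>2 - \<sigma>\<^sup>2) / (4 * \<sigma>2 ^ 4)" by (rule divide_nonneg_pos[OF c0]) (use s2 in simp)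
  have "\<delta> * (2 * \<sigma>2\<^sup>2 - \<sigma>\<^sup>2) * s / (2 * \<sigma>2 ^ 4) = (2 * \<delta> * s) * ((2 * \<sigma>2\<^sup>2 - \<sigma>\<^sup>2) / (4 * \<sigma>2 ^ 4))"
    using s2 by (simp add: field_simps)
  also have "\<dots> \<le> m * ((2 * \<sigma>2\<^sup>2 - \<sigma>\<^sup>2) / (4 * \<sigma>2 ^ 4))"
    by (rule mult_right_mono[OF assms(3) c])
  finally show "1 + \<delta> * (2 * \<sigma>2\<^sup>2 - \<sigma>\<^sup>2) * s / (2 * \<sigma>2 ^ 4)
         \<le> 1 + 2 * (1 / (4 * \<sigma>2\<^sup>2) - 2 * (1 / (4 * \<sigma>2\<^sup>2))\<^sup>2 * \<sigma>\<^sup>2) * m"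
    unfolding id by (simp add: mult.commute)
  show "0 \<le> 1 / (4 * \<sigma>2\<^sup>2) - 2 * (1 / (4 * \<sigma>2\<^sup>2))\<^sup>2 * \<sigma>\<^sup>2"
    using c id by (smt (verit))
qed

lemma inv_sqrt_mono: "0 < y \<Longrightarrow> y \<le> x \<Longrightarrow> 1 / sqrt x \<le> 1 / sqrt y"
  by (simp add: frac_le)

lemma prod_if_split:
  fixes c1 c2 :: real
  shows "(\<Prod>i<n1+n2. if i < n1 then c1 else c2) = c1 ^ n1 * c2 ^ n2"
proof -
  have "(\<Prod>i<n1+n2. if i < n1 then c1 else c2) = (\<Prod>i\<in>{..<n1+n2} \<inter> {i. i < n1}. c1) * (\<Prod>i\<in>{..<n1+n2} \<inter> - {i. i < n1}. c2)"
    by (rule prod.If_cases) simp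
  also have "{..<n1+n2} \<inter> {i. i < n1} = {..<n1}" by auto
  also have "{..<n1+n2} \<inter> - {i. i < n1} = {n1..<n1+n2}" by auto
  finally show ?thesis by simp
qed

lemma bad_bound:
  fixes \<sigma>1 \<sigma>2 \<delta> :: real
  assumes n: "0 < n1 + n2" and sig: "0 < \<sigma>1" "\<sigma>1 < \<sigma>2" and bs: "\<beta>s \<in> Bps p s" and b: "\<beta> \<in> Bps p s"
    and md: "2 * \<delta> * real s \<le> real (card (symdiff (supp \<beta>s) (supp \<beta>)))" and pos: "0 < \<delta> * real s" and dpos: "0 < \<delta>"
  shows "measure (design_space (n1+n2) p) {\<omega> \<in> space (design_space (n1+n2) p).
      rss (n1+n2) p (fst \<omega>) (response p n1 \<sigma>1 \<sigma>2 \<beta>s (fst \<omega>) (snd \<omega>)) \<beta>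
        \<le> rss (n1+n2) p (fst \<omega>) (response p n1 \<sigma>1 \<sigma>2 \<beta>s (fst \<omega>) (snd \<omega>)) \<beta>s}
    \<le> (1 / sqrt (1 + \<delta> * (2 * \<sigma>2\<^sup>2 - \<sigma>1\<^sup>2) * real s / (2 * \<sigma>2 ^ 4))) ^ n1
       * (1 / sqrt (1 + \<delta> * real s / (2 * \<sigma>2\<^sup>2))) ^ n2"
proof -
  define t where "t = 1 / (4 * \<sigma>2\<^sup>2)"
  define sd where "sd = noise_sd n1 \<sigma>1 \<sigma>2"
  define v where "v j = \<beta>s j - \<beta> j" for j
  define m where "m = real (card {j. j < p \<and> v j \<noteq> 0})"
  define A1 where "A1 = 1 + \<delta> * (2 * \<sigma>2\<^sup>2 - \<sigma>1\<^sup>2) * real s / (2 * \<sigma>2 ^ 4)"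
  define A2 where "A2 = 1 + \<delta> * real s / (2 * \<sigma>2\<^sup>2)"
  have s2: "0 < \<sigma>2" using sig by linarith
  have J0eq: "{j. j < p \<and> v j \<noteq> 0} = symdiff (supp \<beta>s) (supp \<beta>)"
    unfolding v_def by (rule diff_support[OF b bs])
  have mge: "2 * \<delta> * real s \<le> m" using md by (simp add: m_def J0eq)
  have J0: "{j. j < p \<and> v j \<noteq> 0} \<noteq> {}"
  proof
    assume "{j. j < p \<and> v j \<noteq> 0} = {}"
    then have "m = 0" by (simp add: m_def)
    then show False using mge pos by linarith
  qed
  have vv: "\<forall>j<p. v j \<in> {-1, 0, 1}" unfolding v_def by (rule diff_vals[OF b bs])
  have cb1: "A1 \<le> 1 + 2 * (t - 2 * t\<^sup>2 * \<sigma>1\<^sup>2) * m" "0 \<le> t - 2 * t\<^sup>2 * \<sigma>1\<^sup>2"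
    using coef_bound[of \<sigma>1 \<sigma>2 \<delta> "real s" m] sig mge by (auto simp: A1_def t_def)
  have cb2': "1 + \<delta> * (2 * \<sigma>2\<^sup>2 - \<sigma>2\<^sup>2) * real s / (2 * \<sigma>2 ^ 4) \<le> 1 + 2 * (t - 2 * t\<^sup>2 * \<sigma>2\<^sup>2) * m"
     "0 \<le> t - 2 * t\<^sup>2 * \<sigma>2\<^sup>2"
    using coef_bound[of \<sigma>2 \<sigma>2 \<delta> "real s" m] s2 mge by (auto simp: t_def)
  have "\<delta> * (2 * \<sigma>2\<^sup>2 - \<sigma>2\<^sup>2) * real s / (2 * \<sigma>2 ^ 4) = \<delta> * real s / (2 * \<sigma>2\<^sup>2)"
    using s2 by (simp add: field_simps eval_nat_numeral)
  then have cb2: "A2 \<le> 1 + 2 * (t - 2 * t\<^sup>2 * \<sigma>2\<^sup>2) * m" using cb2'(1) by (simp add: A2_def)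
  have A1pos: "0 < A1"
  proof -
    have "0 \<le> 2 * \<sigma>2\<^sup>2 - \<sigma>1\<^sup>2"
      using power_mono[of \<sigma>1 \<sigma>2 2] sig zero_le_power2[of \<sigma>2] by linarith
    then have "0 \<le> \<delta> * (2 * \<sigma>2\<^sup>2 - \<sigma>1\<^sup>2) * real s / (2 * \<sigma>2 ^ 4)"
      using dpos s2 by (intro divide_nonneg_pos mult_nonneg_nonneg) auto
    then show ?thesis by (simp add: A1_def)
  qed
  have A2pos: "0 < A2"
  proof -
    have "0 \<le> \<delta> * real s / (2 * \<sigma>2\<^sup>2)" using pos s2 by (intro divide_nonneg_pos) auto
    then show ?thesis by (simp add: A2_def)
  qed
  have a: "\<forall>i<n1+n2. 0 \<le> t - 2 * t\<^sup>2 * (sd i)\<^sup>2"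
    using cb1(2) cb2'(2) by (auto simp: sd_def noise_sd_def)
  have t: "0 < t" using s2 by (simp add: t_def)
  have seteq: "{\<omega> \<in> space (design_space (n1+n2) p).
      rss (n1+n2) p (fst \<omega>) (response p n1 \<sigma>1 \<sigma>2 \<beta>s (fst \<omega>) (snd \<omega>)) \<beta>
        \<le> rss (n1+n2) p (fst \<omega>) (response p n1 \<sigma>1 \<sigma>2 \<beta>s (fst \<omega>) (snd \<omega>)) \<beta>s}
    = {\<omega> \<in> space (design_space (n1+n2) p).
      (\<Sum>i<n1+n2. (\<Sum>j<p. fst \<omega> (i, j) * v j)\<^sup>2 + 2 * (\<Sum>j<p. fst \<omega> (i, j) * v j) * (sd i * snd \<omega> i)) \<le> 0}"
  proof -
    have "rss (n1+n2) p X (response p n1 \<sigma>1 \<sigma>2 \<beta>s X W) \<beta> \<le> rss (n1+n2) p X (response p n1 \<sigma>1 \<sigma>2 \<beta>s X W) \<beta>s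
      \<longleftrightarrow> (\<Sum>i<n1+n2. (\<Sum>j<p. X (i, j) * v j)\<^sup>2 + 2 * (\<Sum>j<p. X (i, j) * v j) * (sd i * W i)) \<le> 0" for X W
      using rss_diff[of "n1+n2" p X n1 \<sigma>1 \<sigma>2 \<beta>s W \<beta>] unfolding v_def sd_def by linarith
    then show ?thesis by auto
  qed
  have "measure (design_space (n1+n2) p) {\<omega> \<in> space (design_space (n1+n2) p).
      (\<Sum>i<n1+n2. (\<Sum>j<p. fst \<omega> (i, j) * v j)\<^sup>2 + 2 * (\<Sum>j<p. fst \<omega> (i, j) * v j) * (sd i * snd \<omega> i)) \<le> 0}
      \<le> (\<Prod>i<n1+n2. 1 / sqrt (1 + 2 * (t - 2 * t\<^sup>2 * (sd i)\<^sup>2) * m))"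
    unfolding m_def by (rule tail_one[OF vv J0 a n t])
  also have "\<dots> \<le> (\<Prod>i<n1+n2. if i < n1 then 1 / sqrt A1 else 1 / sqrt A2)"
  proof (rule prod_mono)
    fix i assume "i \<in> {..<n1+n2}"
    have "0 \<le> t - 2 * t\<^sup>2 * (sd i)\<^sup>2" using a \<open>i \<in> {..<n1+n2}\<close> by simp
    then have "0 \<le> 2 * (t - 2 * t\<^sup>2 * (sd i)\<^sup>2) * m"
      by (simp add: m_def)
    then show "0 \<le> 1 / sqrt (1 + 2 * (t - 2 * t\<^sup>2 * (sd i)\<^sup>2) * m) \<and>
       1 / sqrt (1 + 2 * (t - 2 * t\<^sup>2 * (sd i)\<^sup>2) * m) \<le> (if i < n1 then 1 / sqrt A1 else 1 / sqrt A2)"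
      using inv_sqrt_mono[OF A1pos cb1(1)] inv_sqrt_mono[OF A2pos cb2]
      by (auto simp: sd_def noise_sd_def)
  qed
  also have "\<dots> = (1 / sqrt A1) ^ n1 * (1 / sqrt A2) ^ n2" by (rule prod_if_split)
  finally show ?thesis unfolding seteq A1_def A2_def .
qed

lemma A_ge1:
  fixes \<sigma>1 \<sigma>2 \<delta> :: real
  assumes "0 < \<sigma>1" "\<sigma>1 < \<sigma>2" "0 < \<delta>"
  shows "1 \<le> 1 + \<delta> * (2 * \<sigma>2\<^sup>2 - \<sigma>1\<^sup>2) * real s / (2 * \<sigma>2 ^ 4)"
    and "1 \<le> 1 + \<delta> * real s / (2 * \<sigma>2\<^sup>2)"
proof -
  have s2: "0 < \<sigma>2" using assms by linarith
  have "0 \<le> 2 * \<sigma>2\<^sup>2 - \<sigma>1\<^sup>2"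
    using power_mono[of \<sigma>1 \<sigma>2 2] assms zero_le_power2[of \<sigma>2] by linarith
  then have "0 \<le> \<delta> * (2 * \<sigma>2\<^sup>2 - \<sigma>1\<^sup>2) * real s / (2 * \<sigma>2 ^ 4)"
    using assms s2 by (intro divide_nonneg_pos mult_nonneg_nonneg) auto
  then show "1 \<le> 1 + \<delta> * (2 * \<sigma>2\<^sup>2 - \<sigma>1\<^sup>2) * real s / (2 * \<sigma>2 ^ 4)" by simp
  have "0 \<le> \<delta> * real s / (2 * \<sigma>2\<^sup>2)" using assms s2 by (intro divide_nonneg_pos) auto
  then show "1 \<le> 1 + \<delta> * real s / (2 * \<sigma>2\<^sup>2)" by simp
qed

lemma rss_meas: "(\<lambda>\<omega>. rss n p (fst \<omega>) (response p n1 \<sigma>1 \<sigma>2 \<beta>s (fst \<omega>) (snd \<omega>)) \<beta>)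
    \<in> borel_measurable (design_space n p)"
  unfolding rss_def response_def design_space_def by measurable

lemma recovery_bound:
  fixes \<sigma>1 \<sigma>2 \<delta> :: real
  assumes n: "0 < n1 + n2" and sig: "0 < \<sigma>1" "\<sigma>1 < \<sigma>2" and bs: "\<beta>s \<in> Bps p s"
    and dpos: "0 < \<delta>" and spos: "0 < s"
  shows "recovery_prob n1 n2 p s \<sigma>1 \<sigma>2 \<beta>s \<delta> \<ge> 1 - real (p choose s) *
     ((1 / sqrt (1 + \<delta> * (2 * \<sigma>2\<^sup>2 - \<sigma>1\<^sup>2) * real s / (2 * \<sigma>2 ^ 4))) ^ n1
       * (1 / sqrt (1 + \<delta> * real s / (2 * \<sigma>2\<^sup>2))) ^ n2)"
proof -
  define D where "D = design_space (n1+n2) p"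
  define E where "E = (1 / sqrt (1 + \<delta> * (2 * \<sigma>2\<^sup>2 - \<sigma>1\<^sup>2) * real s / (2 * \<sigma>2 ^ 4))) ^ n1
       * (1 / sqrt (1 + \<delta> * real s / (2 * \<sigma>2\<^sup>2))) ^ n2"
  define R where "R \<omega> \<beta> = rss (n1+n2) p (fst \<omega>) (response p n1 \<sigma>1 \<sigma>2 \<beta>s (fst \<omega>) (snd \<omega>)) \<beta>" for \<omega> \<beta>
  define G where "G = {\<omega> \<in> space D. \<forall>\<beta>h \<in> ls_argmin (n1 + n2) p s (fst \<omega>) (response p n1 \<sigma>1 \<sigma>2 \<beta>s (fst \<omega>) (snd \<omega>)).
            real (card (symdiff (supp \<beta>s) (supp \<beta>h))) < 2 * \<delta> * real s}"
  define Bad where "Bad = {\<beta> \<in> Bps p s. 2 * \<delta> * real s \<le> real (card (symdiff (supp \<beta>s) (supp \<beta>)))}"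
  define F where "F \<beta> = {\<omega> \<in> space D. R \<omega> \<beta> \<le> R \<omega> \<beta>s}" for \<beta>
  interpret P1: prob_space "PiM ({..<n1+n2} \<times> {..<p}) (\<lambda>_. gauss)" by (rule prob_PiM_gauss)
  interpret P2: prob_space "PiM {..<n1+n2} (\<lambda>_. gauss)" by (rule prob_PiM_gauss)
  interpret P12: pair_prob_space "PiM ({..<n1+n2} \<times> {..<p}) (\<lambda>_. gauss)" "PiM {..<n1+n2} (\<lambda>_. gauss)" ..
  interpret P: prob_space D unfolding D_def design_space_def by (rule P12.prob_space_axioms)
  have Rm: "(\<lambda>\<omega>. R \<omega> \<beta>) \<in> borel_measurable D" for \<beta>
    unfolding R_def D_def by (rule rss_meas)
  have Geq: "G = {\<omega> \<in> space D. \<forall>\<beta>h \<in> Bps p s. (\<forall>\<beta>' \<in> Bps p s. R \<omega> \<beta>h \<le> R \<omega> \<beta>') \<longrightarrow>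
            real (card (symdiff (supp \<beta>s) (supp \<beta>h))) < 2 * \<delta> * real s}"
    unfolding G_def R_def ls_argmin_def by auto
  have Gm: "G \<in> sets D" unfolding Geq using Rm by measurable
  have Fm: "F \<beta> \<in> sets D" for \<beta> unfolding F_def using Rm by measurable
  have sub: "space D - G \<subseteq> (\<Union>\<beta>\<in>Bad. F \<beta>)"
  proof
    fix \<omega> assume "\<omega> \<in> space D - G"
    then obtain \<beta>h where \<omega>: "\<omega> \<in> space D" and bh: "\<beta>h \<in> Bps p s" "\<forall>\<beta>' \<in> Bps p s. R \<omega> \<beta>h \<le> R \<omega> \<beta>'"
      and c: "\<not> real (card (symdiff (supp \<beta>s) (supp \<beta>h))) < 2 * \<delta> * real s"
      unfolding Geq by auto
    have "\<beta>h \<in> Bad" using bh c by (auto simp: Bad_def)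
    moreover have "\<omega> \<in> F \<beta>h" using bh bs \<omega> by (auto simp: F_def)
    ultimately show "\<omega> \<in> (\<Union>\<beta>\<in>Bad. F \<beta>)" by blast
  qed
  have finB: "finite Bad" by (rule finite_subset[of _ "Bps p s"]) (auto simp: Bad_def)
  have "P.prob (space D - G) \<le> P.prob (\<Union>\<beta>\<in>Bad. F \<beta>)"
    by (rule P.finite_measure_mono[OF sub]) (use finB Fm in auto)
  also have "\<dots> \<le> (\<Sum>\<beta>\<in>Bad. P.prob (F \<beta>))"
    by (rule P.finite_measure_subadditive_finite[OF finB]) (use Fm in auto)
  also have "\<dots> \<le> (\<Sum>\<beta>\<in>Bad. E)"
  proof (rule sum_mono)
    fix \<beta> assume b: "\<beta> \<in> Bad"
    show "P.prob (F \<beta>) \<le> E"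
      unfolding F_def R_def D_def E_def
      by (rule bad_bound[OF n sig bs _ _ _ dpos]) (use b dpos spos in \<open>auto simp: Bad_def\<close>)
  qed
  also have "\<dots> = real (card Bad) * E" by simp
  also have "\<dots> \<le> real (p choose s) * E"
  proof (rule mult_right_mono)
    have "card Bad \<le> card (Bps p s)" by (rule card_mono) (auto simp: Bad_def)
    then show "real (card Bad) \<le> real (p choose s)" using card_Bps[of p s] by linarith
    show "0 \<le> E" unfolding E_def using A_ge1[OF sig dpos, of s] by simp
  qed
  finally have "P.prob (space D - G) \<le> real (p choose s) * E" .
  then have "1 - real (p choose s) * E \<le> P.prob G" using P.prob_compl[OF Gm] by linarith
  then show ?thesis unfolding recovery_prob_def G_def D_def E_def by simp
qed


lemma E_exp:
  fixes A1 A2 :: real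
  assumes "0 < A1" "0 < A2"
  shows "(1 / sqrt A1) ^ n1 * (1 / sqrt A2) ^ n2 = exp (- (real n1 * ln A1 + real n2 * ln A2) / 2)"
proof -
  have sq: "sqrt A = exp (ln A / 2)" if "0 < A" for A :: real
  proof (rule real_sqrt_unique)
    show "(exp (ln A / 2))\<^sup>2 = A" using that by (simp add: power2_eq_square mult_exp_exp)
  qed simp
  have inv: "1 / sqrt A = exp (- ln A / 2)" if "0 < A" for A :: real
    using sq[OF that] by (simp add: exp_minus field_simps)
  show ?thesis
    unfolding inv[OF assms(1)] inv[OF assms(2)] exp_of_nat_mult[symmetric] mult_exp_exp
    by (simp add: field_simps)
qed

lemma binom_ln_bound:
  assumes "0 < s" "s < p"
  shows "real (p choose s) \<le> exp (- real s * ln (real s / real p) - real (p - s) * ln (1 - real s / real p))"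
proof -
  define a where "a = real s / real p"
  have a: "0 < a" "a < 1" using assms by (auto simp: a_def)
  have "real (p choose s) * a ^ s * (1 - a) ^ (p - s) \<le> (\<Sum>k\<le>p. real (p choose k) * a ^ k * (1 - a) ^ (p - k))"
    by (rule member_le_sum[where f = "\<lambda>k. real (p choose k) * a ^ k * (1 - a) ^ (p - k)"]) (use assms a in auto)
  also have "\<dots> = (a + (1 - a)) ^ p" by (subst binomial_ring) (simp add: mult.commute mult.left_commute)
  also have "\<dots> = 1" by simp
  finally have c: "real (p choose s) * (a ^ s * (1 - a) ^ (p - s)) \<le> 1" by (simp add: mult.assoc)
  have e: "a ^ s * (1 - a) ^ (p - s) = exp (real s * ln a + real (p - s) * ln (1 - a))"
    using a by (simp add: exp_add exp_of_nat_mult)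
  have pos: "0 < a ^ s * (1 - a) ^ (p - s)" using a by simp
  have "real (p choose s) \<le> 1 / (a ^ s * (1 - a) ^ (p - s))"
    using c pos by (simp add: field_simps)
  also have "\<dots> = exp (- (real s * ln a + real (p - s) * ln (1 - a)))"
    unfolding e exp_minus by (simp add: divide_inverse)
  finally show ?thesis by (simp add: a_def algebra_simps)
qed

lemma final_step:
  fixes pr C E L B N \<epsilon> r :: real
  assumes "1 - C * E \<le> pr" "0 \<le> C" "C \<le> exp B" "E = exp (- L / 2)" "(1 + \<epsilon>) * N \<le> L"
    "B - (1 + \<epsilon>) * N / 2 \<le> - (\<epsilon> + r) * N / 2"
  shows "1 - exp (- (\<epsilon> + r) * N / 2) \<le> pr"
proof -
  have "C * E \<le> exp B * exp (- L / 2)" using assms by (intro mult_mono) auto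
  also have "\<dots> = exp (B - L / 2)" by (simp add: mult_exp_exp)
  also have "\<dots> \<le> exp (- (\<epsilon> + r) * N / 2)" using assms(5,6) by simp
  finally show ?thesis using assms(1) by linarith
qed

lemma conv_lemma:
  fixes pr r N :: "nat \<Rightarrow> real" and \<epsilon> :: real
  assumes r: "r \<longlonglongrightarrow> 0" and e: "0 < \<epsilon>" and N: "filterlim N at_top sequentially"
    and lb: "eventually (\<lambda>k. 1 - exp (- (\<epsilon> + r k) * N k / 2) \<le> pr k) sequentially"
    and ub: "\<And>k. pr k \<le> 1"
  shows "pr \<longlonglongrightarrow> 1"
proof (rule tendsto_sandwich[OF lb _ _ tendsto_const])
  show "eventually (\<lambda>k. pr k \<le> 1) sequentially" using ub by simp
  have c: "(\<lambda>k. (\<epsilon> + r k) / 2) \<longlonglongrightarrow> (\<epsilon> + 0) / 2"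
    by (intro tendsto_intros r) simp
  have "filterlim (\<lambda>k. (\<epsilon> + r k) / 2 * N k) at_top sequentially"
    by (rule filterlim_tendsto_pos_mult_at_top[OF c _ N]) (use e in simp)
  then have "filterlim (\<lambda>k. - ((\<epsilon> + r k) / 2 * N k)) at_bot sequentially"
    by (simp add: filterlim_uminus_at_top)
  then have "((\<lambda>k. exp (- ((\<epsilon> + r k) / 2 * N k))) \<longlongrightarrow> 0) sequentially"
    by (rule filterlim_compose[OF exp_at_bot])
  then have "((\<lambda>k. 1 - exp (- ((\<epsilon> + r k) / 2 * N k))) \<longlongrightarrow> 1 - 0) sequentially"
    by (intro tendsto_intros)
  moreover have "(\<lambda>k. 1 - exp (- (\<epsilon> + r k) * N k / 2)) = (\<lambda>k. 1 - exp (- ((\<epsilon> + r k) / 2 * N k)))"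
    by (intro ext arg_cong[where f="\<lambda>x. 1 - exp x"]) (simp add: field_simps)
  ultimately show "(\<lambda>k. 1 - exp (- (\<epsilon> + r k) * N k / 2)) \<longlonglongrightarrow> 1" by simp
qed


lemma design_prob: "prob_space (design_space n p)"
proof -
  interpret P1: prob_space "PiM ({..<n} \<times> {..<p}) (\<lambda>_. gauss)" by (rule prob_PiM_gauss)
  interpret P2: prob_space "PiM {..<n} (\<lambda>_. gauss)" by (rule prob_PiM_gauss)
  interpret P12: pair_prob_space "PiM ({..<n} \<times> {..<p}) (\<lambda>_. gauss)" "PiM {..<n} (\<lambda>_. gauss)" ..
  show ?thesis unfolding design_space_def by (rule P12.prob_space_axioms)
qed

lemma recovery_le1: "recovery_prob n1 n2 p s \<sigma>1 \<sigma>2 \<beta>s \<delta> \<le> 1"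
  unfolding recovery_prob_def by (rule prob_space.prob_le_1[OF design_prob])

lemma ln_tail:
  assumes "0 < s" "s < p"
  shows "- real (p - s) * ln (1 - real s / real p) \<le> real s"
proof -
  define x where "x = real p / real (p - s)"
  have ps: "0 < real (p - s)" using assms by simp
  have x: "0 < x" using assms by (simp add: x_def)
  have "1 - real s / real p = inverse x" using assms by (simp add: x_def field_simps of_nat_diff)
  then have "- real (p - s) * ln (1 - real s / real p) = real (p - s) * ln x" by (simp add: ln_inverse)
  also have "\<dots> \<le> real (p - s) * (x - 1)" using ln_le_minus_one[OF x] ps by (intro mult_left_mono) auto
  also have "\<dots> = real s" using assms ps by (simp add: x_def field_simps of_nat_diff)
  finally show ?thesis .
qed

lemma bin_entropy_pos: "0 < \<alpha> \<Longrightarrow> \<alpha> < 1 \<Longrightarrow> 0 < bin_entropy \<alpha>"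
proof -
  assume a: "0 < \<alpha>" "\<alpha> < 1"
  have "ln \<alpha> < 0" "ln (1 - \<alpha>) < 0" using a by auto
  then have h: "0 < \<alpha> * (- ln \<alpha>)" "0 < (1 - \<alpha>) * (- ln (1 - \<alpha>))" using a
    by (intro mult_pos_pos; simp)+
  have "bin_entropy \<alpha> = \<alpha> * (- ln \<alpha>) + (1 - \<alpha>) * (- ln (1 - \<alpha>))"
    by (simp add: bin_entropy_def algebra_simps)
  then show ?thesis using h by linarith
qed

theorem theorem1:
  fixes p s n1 n2 :: "nat \<Rightarrow> nat"
    and \<sigma>1 \<sigma>2 :: "nat \<Rightarrow> real"
    and \<beta>s :: "nat \<Rightarrow> nat \<Rightarrow> real"
    and nstar :: "nat \<Rightarrow> real"
    and \<delta> \<epsilon> :: real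
  assumes p_lim: "filterlim p at_top sequentially"
    and n1_pos: "\<forall>k. n1 k \<ge> 1"
    and n2_pos: "\<forall>k. n2 k \<ge> 1"
    and sigma: "\<forall>k. 0 < \<sigma>1 k \<and> \<sigma>1 k < \<sigma>2 k"
    and beta_star: "\<forall>k. \<beta>s k \<in> Bps (p k) (s k)"
    and delta: "0 < \<delta>" "\<delta> < 1"
    and regime:
      "(filterlim s at_top sequentially
          \<and> ((\<lambda>k. real (s k) / real (p k)) \<longlongrightarrow> 0) sequentially
          \<and> (\<forall>k. nstar k = 2 * real (s k) * ln (real (p k) / real (s k))))
       \<or> (\<exists>\<alpha>. 0 < \<alpha> \<and> \<alpha> < 1 \<and> (\<forall>k. real (s k) = \<alpha> * real (p k))
          \<and> (\<forall>k. nstar k = 2 * bin_entropy \<alpha> * real (p k)))"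
    and eps: "\<epsilon> > 0"
    and cond: "eventually (\<lambda>k.
        real (n1 k) * ln (1 + \<delta> * (2 * (\<sigma>2 k)\<^sup>2 - (\<sigma>1 k)\<^sup>2) * real (s k) / (2 * (\<sigma>2 k) ^ 4))
        + real (n2 k) * ln (1 + \<delta> * real (s k) / (2 * (\<sigma>2 k)\<^sup>2))
        \<ge> (1 + \<epsilon>) * nstar k) sequentially"
  shows "\<exists>r :: nat \<Rightarrow> real. (r \<longlonglongrightarrow> 0)
           \<and> eventually (\<lambda>k. recovery_prob (n1 k) (n2 k) (p k) (s k) (\<sigma>1 k) (\<sigma>2 k) (\<beta>s k) \<delta>
                 \<ge> 1 - exp (- (\<epsilon> + r k) * nstar k / 2)) sequentially
           \<and> ((\<lambda>k. recovery_prob (n1 k) (n2 k) (p k) (s k) (\<sigma>1 k) (\<sigma>2 k) (\<beta>s k) \<delta>)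
                 \<longlonglongrightarrow> 1)"
proof -
  define Pr where "Pr k = recovery_prob (n1 k) (n2 k) (p k) (s k) (\<sigma>1 k) (\<sigma>2 k) (\<beta>s k) \<delta>" for k
  define A1 where "A1 k = 1 + \<delta> * (2 * (\<sigma>2 k)\<^sup>2 - (\<sigma>1 k)\<^sup>2) * real (s k) / (2 * (\<sigma>2 k) ^ 4)" for k
  define A2 where "A2 k = 1 + \<delta> * real (s k) / (2 * (\<sigma>2 k)\<^sup>2)" for k
  define L where "L k = real (n1 k) * ln (A1 k) + real (n2 k) * ln (A2 k)" for k
  have base: "1 - real (p k choose s k) * exp (- L k / 2) \<le> Pr k" if s0: "0 < s k" for k
  proof -
    have sg: "0 < \<sigma>1 k" "\<sigma>1 k < \<sigma>2 k" using sigma by auto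
    have "1 \<le> A1 k" "1 \<le> A2 k" using A_ge1[OF sg delta(1), of "s k"] by (auto simp: A1_def A2_def)
    then have e: "(1 / sqrt (A1 k)) ^ n1 k * (1 / sqrt (A2 k)) ^ n2 k = exp (- L k / 2)"
      unfolding L_def by (intro E_exp) auto
    have "1 \<le> n1 k" using n1_pos by blast
    then have n: "0 < n1 k + n2 k" by simp
    have "1 - real (p k choose s k) * ((1 / sqrt (A1 k)) ^ n1 k * (1 / sqrt (A2 k)) ^ n2 k) \<le> Pr k"
      unfolding Pr_def A1_def A2_def
      by (rule recovery_bound[OF n sg _ delta(1) s0]) (use beta_star in auto)
    then show ?thesis unfolding e .
  qed
  have condL: "eventually (\<lambda>k. (1 + \<epsilon>) * nstar k \<le> L k) sequentially"
    using cond by (simp add: L_def A1_def A2_def)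
  have le1: "\<And>k. Pr k \<le> 1" unfolding Pr_def by (rule recovery_le1)
  from regime have main: "\<exists>r :: nat \<Rightarrow> real. (r \<longlonglongrightarrow> 0)
      \<and> eventually (\<lambda>k. 1 - exp (- (\<epsilon> + r k) * nstar k / 2) \<le> Pr k) sequentially
      \<and> filterlim nstar at_top sequentially"
  proof (elim disjE conjE exE)
    assume sl: "filterlim s at_top sequentially"
      and sp: "((\<lambda>k. real (s k) / real (p k)) \<longlongrightarrow> 0) sequentially"
      and ns: "\<forall>k. nstar k = 2 * real (s k) * ln (real (p k) / real (s k))"
    define q where "q k = real (p k) / real (s k)" for k
    have ev_s: "eventually (\<lambda>k. 1 \<le> s k) sequentially" using sl by (simp add: filterlim_at_top)
    have ev_p: "eventually (\<lambda>k. 1 \<le> p k) sequentially" using p_lim by (simp add: filterlim_at_top)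
    have ev_pos: "eventually (\<lambda>k. 0 < real (s k) / real (p k)) sequentially"
      using ev_s ev_p by eventually_elim auto
    have "filterlim (\<lambda>k. real (s k) / real (p k)) (at_right 0) sequentially"
      by (rule tendsto_imp_filterlim_at_right[OF sp ev_pos])
    then have "filterlim (\<lambda>k. inverse (real (s k) / real (p k))) at_top sequentially"
      by (rule filterlim_compose[OF filterlim_inverse_at_top_right])
    moreover have "(\<lambda>k. inverse (real (s k) / real (p k))) = q"
      by (rule ext) (simp add: q_def)
    ultimately have qlim: "filterlim q at_top sequentially" by simp
    have lnq: "filterlim (\<lambda>k. ln (q k)) at_top sequentially"
      by (rule filterlim_compose[OF ln_at_top qlim])
    define r where "r k = - inverse (ln (q k))" for k
    have r0: "r \<longlonglongrightarrow> 0" unfolding r_def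
      using tendsto_minus[OF tendsto_inverse_0_at_top[OF lnq]] by simp
    have ev_lnq: "eventually (\<lambda>k. 1 \<le> ln (q k)) sequentially" using lnq by (simp add: filterlim_at_top)
    have ev_lt1: "eventually (\<lambda>k. real (s k) / real (p k) < 1) sequentially"
      using sp by (rule order_tendstoD) simp
    have slim: "filterlim (\<lambda>k. real (s k)) at_top sequentially"
      by (rule filterlim_compose[OF filterlim_real_sequentially sl])
    have nlim: "filterlim nstar at_top sequentially"
    proof (rule filterlim_at_top_mono[OF slim])
      show "eventually (\<lambda>k. real (s k) \<le> nstar k) sequentially" using ev_lnq
      proof eventually_elim
        case (elim k)
        have "2 * real (s k) * 1 \<le> 2 * real (s k) * ln (q k)"
          using elim by (intro mult_left_mono) auto
        then show ?case using ns by (simp add: q_def)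
      qed
    qed
    have ev: "eventually (\<lambda>k. 1 - exp (- (\<epsilon> + r k) * nstar k / 2) \<le> Pr k) sequentially"
      using ev_s ev_p ev_lnq ev_lt1 condL
    proof eventually_elim
      case (elim k)
      have s0: "0 < s k" using elim by simp
      have "real (s k) < real (p k)" using elim(2,4) by (simp add: field_simps)
      then have spk: "s k < p k" by simp
      have C: "real (p k choose s k) \<le> exp (nstar k / 2 + real (s k))"
      proof -
        have "real (p k choose s k) \<le> exp (- real (s k) * ln (real (s k) / real (p k))
               - real (p k - s k) * ln (1 - real (s k) / real (p k)))"
          by (rule binom_ln_bound[OF s0 spk])
        also have "\<dots> \<le> exp (nstar k / 2 + real (s k))"
        proof -
          have "- real (s k) * ln (real (s k) / real (p k)) = real (s k) * ln (q k)"
            using s0 elim by (simp add: q_def ln_div algebra_simps)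
          then show ?thesis using ln_tail[OF s0 spk] ns by (simp add: q_def)
        qed
        finally show ?thesis .
      qed
      have rn: "r k * nstar k = - 2 * real (s k)"
        using elim(3) ns by (simp add: r_def q_def field_simps)
      have "nstar k / 2 + real (s k) - (1 + \<epsilon>) * nstar k / 2 \<le> - (\<epsilon> + r k) * nstar k / 2"
      proof -
        have "- (\<epsilon> + r k) * nstar k / 2 = - (\<epsilon> * nstar k) / 2 - r k * nstar k / 2"
          by (simp add: field_simps)
        moreover have "(1 + \<epsilon>) * nstar k / 2 = nstar k / 2 + \<epsilon> * nstar k / 2"
          by (simp add: field_simps)
        ultimately show ?thesis using rn by linarith
      qed
      then show ?case
        by (intro final_step[OF base[OF s0] _ C refl elim(5)]) auto
    qed
    show ?thesis using r0 ev nlim by blast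
  next
    fix \<alpha> :: real
    assume a: "0 < \<alpha>" "\<alpha> < 1" and sa: "\<forall>k. real (s k) = \<alpha> * real (p k)"
      and ns: "\<forall>k. nstar k = 2 * bin_entropy \<alpha> * real (p k)"
    have hpos: "0 < bin_entropy \<alpha>" using bin_entropy_pos a by auto
    have plim: "filterlim (\<lambda>k. real (p k)) at_top sequentially"
      by (rule filterlim_compose[OF filterlim_real_sequentially p_lim])
    have nlim: "filterlim nstar at_top sequentially"
    proof -
      have "filterlim (\<lambda>k. (2 * bin_entropy \<alpha>) * real (p k)) at_top sequentially"
        by (rule filterlim_tendsto_pos_mult_at_top[OF tendsto_const _ plim]) (use hpos in simp)
      moreover have "(\<lambda>k. (2 * bin_entropy \<alpha>) * real (p k)) = nstar"
        by (rule ext) (simp add: ns)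
      ultimately show ?thesis by simp
    qed
    have ev_p: "eventually (\<lambda>k. 1 / \<alpha> + 1 \<le> real (p k)) sequentially"
      using plim by (simp add: filterlim_at_top)
    have ev: "eventually (\<lambda>k. 1 - exp (- (\<epsilon> + 0) * nstar k / 2) \<le> Pr k) sequentially"
      using ev_p condL
    proof eventually_elim
      case (elim k)
      have pp: "0 < real (p k)" using elim a
        by (smt (verit) divide_pos_pos)
      have "1 / \<alpha> * \<alpha> < real (p k) * \<alpha>" using elim a by (intro mult_strict_right_mono) auto
      then have "1 < real (s k)" using sa a by (simp add: mult.commute)
      then have s0: "0 < s k" by simp
      have "real (s k) < real (p k)" using sa a pp by (simp add: mult_less_cancel_right1 mult.commute)
      then have spk: "s k < p k" by simp
      have ratio: "real (s k) / real (p k) = \<alpha>" using sa pp by simp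
      have pms: "real (p k - s k) = (1 - \<alpha>) * real (p k)" using spk sa by (simp add: of_nat_diff algebra_simps)
      have C: "real (p k choose s k) \<le> exp (nstar k / 2)"
      proof -
        have "real (p k choose s k) \<le> exp (- real (s k) * ln (real (s k) / real (p k))
               - real (p k - s k) * ln (1 - real (s k) / real (p k)))"
          by (rule binom_ln_bound[OF s0 spk])
        also have "\<dots> = exp (nstar k / 2)" unfolding ratio pms using sa ns
          by (simp add: bin_entropy_def algebra_simps)
        finally show ?thesis .
      qed
      have "nstar k / 2 - (1 + \<epsilon>) * nstar k / 2 \<le> - (\<epsilon> + 0) * nstar k / 2"
        by (simp add: algebra_simps)
      then show ?case
        by (intro final_step[OF base[OF s0] _ C refl elim(2)]) auto
    qed
    show ?thesis using ev nlim by (intro exI[of _ "\<lambda>_. 0"]) auto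
  qed
  then obtain r :: "nat \<Rightarrow> real" where r: "r \<longlonglongrightarrow> 0"
    and ev: "eventually (\<lambda>k. 1 - exp (- (\<epsilon> + r k) * nstar k / 2) \<le> Pr k) sequentially"
    and nlim: "filterlim nstar at_top sequentially" by blast
  have "Pr \<longlonglongrightarrow> 1" by (rule conv_lemma[OF r eps nlim ev le1])
  then show ?thesis using r ev unfolding Pr_def by blast
qed

end
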